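(* Let $(\Omega,\mathcal{F})$ be a measurable space and $\mathcal{P}=\{P_1,\dots,P_K\}$ a finite set of probability measures on it, with $\hat{\mathbb{E}}[Z]=\max_{1\le i\le K}E_{P_i}[Z]$. Let $X,Y$ be random variables with $\hat{\mathbb{E}}[X^2]+\hat{\mathbb{E}}[Y^2]<\infty$. Let $\boldsymbol{\mu}=(E_{P_1}[X],\dots,E_{P_K}[X])^T$, $\boldsymbol{\nu}=(E_{P_1}[Y],\dots,E_{P_K}[Y])^T$ and $\boldsymbol{\kappa}=(E_{P_1}[XY],\dots,E_{P_K}[XY])^T$ in $\mathbb{R}^K$. Then $$\overline{C}(X,Y)=\max_{\boldsymbol{\lambda}\in\Delta^K}\left(\boldsymbol{\lambda}^T\boldsymbol{\kappa}-\boldsymbol{\lambda}^T\boldsymbol{\mu}\boldsymbol{\nu}^T\boldsymbol{\lambda}\right),$$ where $\Delta^K=\{\boldsymbol{\lambda}=(\lambda_1,\dots,\lambda_K)\in\mathbb{R}^K:\sum_{i=1}^K\lambda_i=1,\ \lambda_i\ge0\}$.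
   Context: For a random variable $W$ with $\hat{\mathbb{E}}[W^2]<\infty$: $\overline{\mu}_W=\hat{\mathbb{E}}[W]$, $\underline{\mu}_W=-\hat{\mathbb{E}}[-W]$, $M_W=[\underline{\mu}_W,\overline{\mu}_W]$. Upper covariance $\overline{C}(X,Y)=\max_{\mu_2\in M_Y}\min_{\mu_1\in M_X}\hat{\mathbb{E}}[(X-\mu_1)(Y-\mu_2)]$. *)

theory Defs
  imports "HOL-Probability.Probability"
begin

text \<open>Sublinear expectation generated by a finite family of probability measures
  P i, indexed by a finite type 'k (so K = CARD('k)).\<close>
definition sublin_exp :: "('k::finite \<Rightarrow> 'a measure) \<Rightarrow> ('a \<Rightarrow> real) \<Rightarrow> real" where
  "sublin_exp P Z = Max (range (\<lambda>i. integral\<^sup>L (P i) Z))"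

definition upper_mean :: "('k::finite \<Rightarrow> 'a measure) \<Rightarrow> ('a \<Rightarrow> real) \<Rightarrow> real" where
  "upper_mean P W = sublin_exp P W"

definition lower_mean :: "('k::finite \<Rightarrow> 'a measure) \<Rightarrow> ('a \<Rightarrow> real) \<Rightarrow> real" where
  "lower_mean P W = - sublin_exp P (\<lambda>w. - W w)"

definition mean_interval :: "('k::finite \<Rightarrow> 'a measure) \<Rightarrow> ('a \<Rightarrow> real) \<Rightarrow> real set" where
  "mean_interval P W = {lower_mean P W .. upper_mean P W}"

definition upper_cov :: "('k::finite \<Rightarrow> 'a measure) \<Rightarrow> ('a \<Rightarrow> real) \<Rightarrow> ('a \<Rightarrow> real) \<Rightarrow> real" where
  "upper_cov P X Y =
     (SUP m2 \<in> mean_interval P Y. INF m1 \<in> mean_interval P X.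
        sublin_exp P (\<lambda>w. (X w - m1) * (Y w - m2)))"

definition prob_simplex :: "('k::finite \<Rightarrow> real) set" where
  "prob_simplex = {l. (\<forall>i. 0 \<le> l i) \<and> (\<Sum>i\<in>UNIV. l i) = 1}"

end

theory Submission imports Defs begin

lemma sum_two:
  fixes f :: "'k::finite \<Rightarrow> real"
  assumes "i \<noteq> j"
  shows "(\<Sum>k\<in>UNIV. (if k = i then x else if k = j then y else 0) * f k) = x * f i + y * f j"
proof -
  have "(\<Sum>k\<in>UNIV. (if k = i then x else if k = j then y else 0) * f k)
      = (\<Sum>k\<in>UNIV. (if k = i then x * f i else 0) + (if k = j then y * f j else 0))"
    by (rule sum.cong) (use assms in auto)
  also have "\<dots> = x * f i + y * f j" by (simp add: sum.distrib)
  finally show ?thesis .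
qed

lemma sum_two':
  fixes i j :: "'k::finite"
  assumes "i \<noteq> j"
  shows "(\<Sum>k\<in>UNIV. (if k = i then x else if k = j then y else 0)) = (x + y :: real)"
  using sum_two[OF assms, of x y "\<lambda>_. 1"] by simp

lemma delta1:
  fixes f :: "'k::finite \<Rightarrow> real"
  shows "(\<Sum>k\<in>UNIV. (if k = i then 1 else 0) * f k) = f i"
proof -
  have "(\<Sum>k\<in>UNIV. (if k = i then 1 else 0) * f k) = (\<Sum>k\<in>UNIV. if k = i then f i else 0)"
    by (rule sum.cong) auto
  then show ?thesis by simp
qed

lemma simplex_le:
  fixes l a :: "'k::finite \<Rightarrow> real"
  assumes "l \<in> prob_simplex" "\<And>i. a i \<le> A1"
  shows "(\<Sum>i\<in>UNIV. l i * a i) \<le> A1"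
proof -
  have "(\<Sum>i\<in>UNIV. l i * a i) \<le> (\<Sum>i\<in>UNIV. l i * A1)"
    using assms by (intro sum_mono mult_left_mono) (auto simp: prob_simplex_def)
  also have "\<dots> = A1" using assms by (simp add: prob_simplex_def flip: sum_distrib_right)
  finally show ?thesis .
qed

lemma simplex_ge:
  fixes l a :: "'k::finite \<Rightarrow> real"
  assumes "l \<in> prob_simplex" "\<And>i. A0 \<le> a i"
  shows "A0 \<le> (\<Sum>i\<in>UNIV. l i * a i)"
  using simplex_le[OF assms(1), of "\<lambda>i. - a i" "-A0"] assms(2) by (simp add: sum_negf)

lemma simplex_Max:
  fixes l h :: "'k::finite \<Rightarrow> real"
  assumes "l \<in> prob_simplex"
  shows "(\<Sum>i\<in>UNIV. l i * h i) \<le> Max (range h)"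
  by (rule simplex_le[OF assms]) simp

lemma main_pure:
  fixes a b c :: "'k::finite \<Rightarrow> real"
  assumes ha: "\<And>i. A0 \<le> a i \<and> a i \<le> A1" and hb: "\<And>i. B0 \<le> b i \<and> b i \<le> B1"
  shows "(SUP m2\<in>{B0..B1}. INF m1\<in>{A0..A1}. Max (range (\<lambda>i. c i - m2*a i - m1*b i + m1*m2)))
    = (SUP l\<in>prob_simplex. (\<Sum>i\<in>UNIV. l i * c i) - (\<Sum>i\<in>UNIV. l i * a i) * (\<Sum>i\<in>UNIV. l i * b i))"
proof -
  define h where "h m1 m2 = Max (range (\<lambda>i. c i - m2*a i - m1*b i + m1*m2))" for m1 m2
  define g where "g l = (\<Sum>i\<in>UNIV. l i * c i) - (\<Sum>i\<in>UNIV. l i * a i) * (\<Sum>i\<in>UNIV. l i * b i)"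
    for l :: "'k \<Rightarrow> real"
  define Ra where "Ra = max \<bar>A0\<bar> \<bar>A1\<bar>"
  define Rb where "Rb = max \<bar>B0\<bar> \<bar>B1\<bar>"
  define Cm where "Cm = Max (range c)"
  have IA: "A0 \<le> A1" using ha[of undefined] by auto
  have IB: "B0 \<le> B1" using hb[of undefined] by auto
  have absA: "\<bar>x\<bar> \<le> Ra" if "A0 \<le> x" "x \<le> A1" for x using that unfolding Ra_def by auto
  have absB: "\<bar>x\<bar> \<le> Rb" if "B0 \<le> x" "x \<le> B1" for x using that unfolding Rb_def by auto
  have Ra0: "0 \<le> Ra" "0 \<le> Rb" unfolding Ra_def Rb_def by auto
  have cle: "c i \<le> Cm" for i unfolding Cm_def by simp
  have term_le: "c i - m2*a i - m1*b i + m1*m2 \<le> Cm + 3 * (Ra * Rb)"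
    if "A0 \<le> m1" "m1 \<le> A1" "B0 \<le> m2" "m2 \<le> B1" for i m1 m2
  proof -
    have "\<bar>m2*a i\<bar> \<le> Rb * Ra" unfolding abs_mult
      using absA absB ha hb that Ra0 by (intro mult_mono) auto
    moreover have "\<bar>m1*b i\<bar> \<le> Ra * Rb" unfolding abs_mult
      using absA absB ha hb that Ra0 by (intro mult_mono) auto
    moreover have "\<bar>m1*m2\<bar> \<le> Ra * Rb" unfolding abs_mult
      using absA absB ha hb that Ra0 by (intro mult_mono) auto
    ultimately show ?thesis using cle[of i] by (simp add: algebra_simps abs_le_iff)
  qed
  have term_ge: "c i - \<bar>m2\<bar> * Ra - Ra * Rb - Ra * \<bar>m2\<bar> \<le> c i - m2*a i - m1*b i + m1*m2"
    if "A0 \<le> m1" "m1 \<le> A1" for i m1 m2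
  proof -
    have "\<bar>m2*a i\<bar> \<le> \<bar>m2\<bar> * Ra" unfolding abs_mult
      using absA absB ha hb that Ra0 by (intro mult_mono) auto
    moreover have "\<bar>m1*b i\<bar> \<le> Ra * Rb" unfolding abs_mult
      using absA absB ha hb that Ra0 by (intro mult_mono) auto
    moreover have "\<bar>m1*m2\<bar> \<le> Ra * \<bar>m2\<bar>" unfolding abs_mult
      using absA absB ha hb that Ra0 by (intro mult_mono) auto
    ultimately show ?thesis by (simp add: algebra_simps abs_le_iff)
  qed
  have bddB: "bdd_below ((\<lambda>m1. h m1 m2) ` {A0..A1})" for m2
  proof (rule bdd_belowI2)
    fix m1 assume "m1 \<in> {A0..A1}"
    then have "c undefined - \<bar>m2\<bar> * Ra - Ra * Rb - Ra * \<bar>m2\<bar>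
       \<le> c undefined - m2*a undefined - m1*b undefined + m1*m2" using term_ge by auto
    also have "\<dots> \<le> h m1 m2" unfolding h_def by simp
    finally show "c undefined - \<bar>m2\<bar> * Ra - Ra * Rb - Ra * \<bar>m2\<bar> \<le> h m1 m2" .
  qed
  have h_le: "h m1 m2 \<le> Cm + 3 * (Ra * Rb)"
    if "A0 \<le> m1" "m1 \<le> A1" "B0 \<le> m2" "m2 \<le> B1" for m1 m2
    unfolding h_def using term_le[OF that] by simp
  have bddA: "bdd_above ((\<lambda>m2. INF m1\<in>{A0..A1}. h m1 m2) ` {B0..B1})"
  proof (rule bdd_aboveI2)
    fix m2 assume m2: "m2 \<in> {B0..B1}"
    have "(INF m1\<in>{A0..A1}. h m1 m2) \<le> h A0 m2"
      by (rule cInf_lower) (use IA bddB in auto)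
    also have "\<dots> \<le> Cm + 3 * (Ra * Rb)" using h_le IA m2 by auto
    finally show "(INF m1\<in>{A0..A1}. h m1 m2) \<le> Cm + 3 * (Ra * Rb)" .
  qed
  have lower: "g l \<le> h m1 (\<Sum>i\<in>UNIV. l i * b i)" if l: "l \<in> prob_simplex" for l m1
  proof -
    let ?m2 = "\<Sum>i\<in>UNIV. l i * b i"
    have s1: "(\<Sum>i\<in>UNIV. l i) = 1" using l by (simp add: prob_simplex_def)
    have gen: "(\<Sum>i\<in>UNIV. l i * (c i - z*a i - m1*b i + m1*z))
       = (\<Sum>i\<in>UNIV. l i * c i) - z * (\<Sum>i\<in>UNIV. l i * a i) - m1 * (\<Sum>i\<in>UNIV. l i * b i) + m1 * z * (\<Sum>i\<in>UNIV. l i)" for z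
      by (simp add: algebra_simps sum.distrib sum_subtractf sum_distrib_left sum_distrib_right)
    have "(\<Sum>i\<in>UNIV. l i * (c i - ?m2*a i - m1*b i + m1*?m2))
       = (\<Sum>i\<in>UNIV. l i * c i) - ?m2 * (\<Sum>i\<in>UNIV. l i * a i) - m1 * ?m2 + m1 * ?m2 * (\<Sum>i\<in>UNIV. l i)"
      by (rule gen)
    also have "\<dots> = g l" unfolding g_def s1 by simp
    finally show ?thesis using simplex_Max[OF l, of "\<lambda>i. c i - ?m2*a i - m1*b i + m1*?m2"]
      unfolding h_def by simp
  qed
  have g_bdd: "g l \<le> Cm + 3 * (Ra * Rb)" if l: "l \<in> prob_simplex" for l
  proof -
    have "B0 \<le> (\<Sum>i\<in>UNIV. l i * b i)" "(\<Sum>i\<in>UNIV. l i * b i) \<le> B1"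
      using simplex_le[OF l] simplex_ge[OF l] hb by auto
    then show ?thesis using lower[OF l, of A0] h_le[of A0] IA by fastforce
  qed
  have bddG: "bdd_above (g ` prob_simplex)" using g_bdd by (intro bdd_aboveI2)
  define V where "V = (SUP l\<in>prob_simplex. g l)"
  have gV: "g l \<le> V" if "l \<in> prob_simplex" for l
    unfolding V_def by (rule cSUP_upper[OF that bddG])
  define e where "e i = (\<lambda>k. if k = i then 1 else 0 :: real)" for i :: 'k
  have e_simp: "e i \<in> prob_simplex" for i unfolding e_def prob_simplex_def by simp
  have E: "c i - a i * b i \<le> V" for i
  proof -
    have "g (e i) = c i - a i * b i" unfolding g_def e_def by (simp only: delta1)
    then show ?thesis using gV[OF e_simp[of i]] by simp
  qed
  have unif: "(\<lambda>_::'k. 1 / real CARD('k)) \<in> prob_simplex" unfolding prob_simplex_def by simp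
  have ge: "V \<le> (SUP m2\<in>{B0..B1}. INF m1\<in>{A0..A1}. h m1 m2)"
    unfolding V_def
  proof (rule cSUP_least)
    show "prob_simplex \<noteq> ({}::('k\<Rightarrow>real) set)" using unif by auto
    fix l :: "'k \<Rightarrow> real" assume l: "l \<in> prob_simplex"
    let ?m2 = "\<Sum>i\<in>UNIV. l i * b i"
    have m2: "?m2 \<in> {B0..B1}" using simplex_le[OF l] simplex_ge[OF l] hb by auto
    have "g l \<le> (INF m1\<in>{A0..A1}. h m1 ?m2)"
      by (rule cINF_greatest) (use IA lower[OF l] in auto)
    also have "\<dots> \<le> (SUP m2\<in>{B0..B1}. INF m1\<in>{A0..A1}. h m1 m2)"
      by (rule cSUP_upper[OF m2 bddA])
    finally show "g l \<le> \<dots>" .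
  qed
  have le: "(SUP m2\<in>{B0..B1}. INF m1\<in>{A0..A1}. h m1 m2) \<le> V"
  proof (rule cSUP_least)
    show "{B0..B1} \<noteq> {}" using IB by auto
    fix m2 assume m2: "m2 \<in> {B0..B1}"
    define s where "s i = m2 - b i" for i
    define d where "d i = c i - m2 * a i" for i
    define L where "L = Max (insert A0 ((\<lambda>j. (V - d j) / s j) ` {j. s j < 0}))"
    have finL: "finite (insert A0 ((\<lambda>j. (V - d j) / s j) ` {j. s j < 0}))" by simp
    have L_ge0: "A0 \<le> L" unfolding L_def using finL by simp
    have L_ge: "(V - d j) / s j \<le> L" if "s j < 0" for j unfolding L_def using finL that by simp
    have L_cases: "L = A0 \<or> (\<exists>j. s j < 0 \<and> L = (V - d j) / s j)"
      using Max_in[OF finL] unfolding L_def[symmetric] by auto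
    have pair: "s i * d j - s j * d i \<le> V * (s i - s j)" if si: "s i > 0" and sj: "s j < 0" for i j
    proof -
      have ij: "i \<noteq> j" using si sj by auto
      define p where "p = - s j / (s i - s j)"
      define q where "q = s i / (s i - s j)"
      define l where "l k = (if k = i then p else if k = j then q else 0)" for k
      have pos: "s i - s j > 0" using si sj by simp
      have p0: "p \<ge> 0" "q \<ge> 0" unfolding p_def q_def using si sj pos by (auto intro: divide_nonpos_pos divide_nonneg_pos)
      have pq: "p + q = 1" unfolding p_def q_def using pos by (subst add_divide_distrib[symmetric]) simp
      have ps: "p * s i + q * s j = 0" unfolding p_def q_def using pos by (simp add: field_simps)
      have l_simp: "l \<in> prob_simplex" unfolding prob_simplex_def l_def
        using p0 pq sum_two'[OF ij, of p q] by auto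
      have sums: "(\<Sum>k\<in>UNIV. l k * f k) = p * f i + q * f j" for f :: "'k \<Rightarrow> real"
        unfolding l_def by (rule sum_two[OF ij])
      have bm: "p * b i + q * b j = m2" using ps pq unfolding s_def by (simp add: algebra_simps) (metis distrib_left mult.right_neutral)
      have "g l = p * d i + q * d j"
        unfolding g_def sums bm d_def using pq by (simp add: algebra_simps)
      then have "p * d i + q * d j \<le> V" using gV[OF l_simp] by simp
      then have "(s i - s j) * (p * d i + q * d j) \<le> (s i - s j) * V"
        using pos by (intro mult_left_mono) auto
      moreover have "(s i - s j) * (p * d i + q * d j) = s i * d j - s j * d i"
      proof -
        have "(s i - s j) * p = - s j" "(s i - s j) * q = s i" unfolding p_def q_def using pos by auto
        then show ?thesis by (simp add: distrib_left mult.assoc[symmetric])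
      qed
      ultimately show ?thesis by (simp add: algebra_simps)
    qed
    have L_le: "L \<le> A1"
      using L_cases
    proof
      assume "L = A0" then show ?thesis using IA by simp
    next
      assume "\<exists>j. s j < 0 \<and> L = (V - d j) / s j"
      then obtain j where sj: "s j < 0" and Lj: "L = (V - d j) / s j" by auto
      have "d j + A1 * s j \<le> c j - a j * b j"
      proof -
        have "d j + A1 * s j - (c j - a j * b j) = (A1 - a j) * s j"
          unfolding d_def s_def by (simp add: algebra_simps)
        also have "\<dots> \<le> 0" using ha[of j] sj by (simp add: mult_nonneg_nonpos)
        finally show ?thesis by simp
      qed
      then have "d j + A1 * s j \<le> V" using E[of j] by simp
      then have "A1 * s j \<le> V - d j" by simp
      then show ?thesis unfolding Lj using sj by (simp add: divide_le_eq mult.commute) 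
    qed
    have constr: "c i - m2*a i - L*b i + L*m2 \<le> V" for i
    proof -
      have eq: "c i - m2*a i - L*b i + L*m2 = d i + L * s i" unfolding d_def s_def by (simp add: algebra_simps)
      consider "s i < 0" | "s i = 0" | "s i > 0" by linarith
      then show ?thesis
      proof cases
        case 1
        have "L * s i \<le> (V - d i) / s i * s i" using L_ge[OF 1] 1 by (intro mult_right_mono_neg) auto
        then show ?thesis unfolding eq using 1 by simp
      next
        case 2
        then have "m2 = b i" unfolding s_def by simp
        then show ?thesis unfolding eq using 2 E[of i] unfolding d_def by (simp add: mult.commute)
      next
        case 3
        from L_cases show ?thesis
        proof
          assume LA: "L = A0"
          have "d i + A0 * s i - (c i - a i * b i) = (A0 - a i) * s i"
            unfolding d_def s_def by (simp add: algebra_simps)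
          also have "\<dots> \<le> 0" using ha[of i] 3 by (simp add: mult_nonpos_nonneg)
          finally have "d i + L * s i \<le> V" using E[of i] LA by simp then show ?thesis unfolding eq .
        next
          assume "\<exists>j. s j < 0 \<and> L = (V - d j) / s j"
          then obtain j where sj: "s j < 0" and Lj: "L = (V - d j) / s j" by auto
          have P: "s i * d j - s j * d i \<le> V * (s i - s j)" by (rule pair[OF 3 sj])
          have "(d i + L * s i) * s j = s j * d i + (V - d j) * s i"
            unfolding Lj using sj by (simp add: field_simps)
          also have "\<dots> \<ge> V * s j" using P by (simp add: algebra_simps)
          finally have "V * s j \<le> (d i + L * s i) * s j" .
          then show ?thesis unfolding eq using sj by (simp add: mult_le_cancel_right)
        qed
      qed
    qed
    have "(INF m1\<in>{A0..A1}. h m1 m2) \<le> h L m2"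
      by (rule cInf_lower) (use L_ge0 L_le bddB in auto)
    also have "\<dots> \<le> V" unfolding h_def using constr by simp
    finally show "(INF m1\<in>{A0..A1}. h m1 m2) \<le> V" .
  qed
  show ?thesis using ge le unfolding h_def[abs_def] g_def[abs_def] V_def by simp
qed


lemma absxy: "\<bar>x * y\<bar> \<le> x\<^sup>2 + (y::real)\<^sup>2"
proof -
  have "0 \<le> (\<bar>x\<bar> - \<bar>y\<bar>)\<^sup>2" by simp
  then have "2 * (\<bar>x\<bar> * \<bar>y\<bar>) \<le> x\<^sup>2 + y\<^sup>2" by (simp add: power2_eq_square algebra_simps)
  moreover have "0 \<le> \<bar>x\<bar> * \<bar>y\<bar>" by simp
  ultimately show ?thesis unfolding abs_mult by linarith
qed

theorem proposition5p1:
  fixes M :: "'a measure" and P :: "'k::finite \<Rightarrow> 'a measure"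
    and X Y :: "'a \<Rightarrow> real"
  assumes prob: "\<And>i. prob_space (P i)"
    and sets_eq: "\<And>i. sets (P i) = sets M"
    and X_meas: "X \<in> borel_measurable M" and Y_meas: "Y \<in> borel_measurable M"
    and X_sq: "\<And>i. integrable (P i) (\<lambda>w. (X w)\<^sup>2)"
    and Y_sq: "\<And>i. integrable (P i) (\<lambda>w. (Y w)\<^sup>2)"
  shows "upper_cov P X Y =
    (SUP l \<in> prob_simplex.
        (\<Sum>i\<in>UNIV. l i * integral\<^sup>L (P i) (\<lambda>w. X w * Y w))
      - (\<Sum>i\<in>UNIV. l i * integral\<^sup>L (P i) X) * (\<Sum>i\<in>UNIV. l i * integral\<^sup>L (P i) Y))"
proof -
  define a where "a i = integral\<^sup>L (P i) X" for i
  define b where "b i = integral\<^sup>L (P i) Y" for i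
  define c where "c i = integral\<^sup>L (P i) (\<lambda>w. X w * Y w)" for i
  have facts: "integral\<^sup>L (P i) (\<lambda>w. (X w - m1) * (Y w - m2)) = c i - m2 * a i - m1 * b i + m1 * m2
      \<and> integral\<^sup>L (P i) (\<lambda>w. - X w) = - a i \<and> integral\<^sup>L (P i) (\<lambda>w. - Y w) = - b i" for i m1 m2
  proof -
    interpret prob_space "P i" by (rule prob)
    have mX: "X \<in> borel_measurable (P i)" unfolding measurable_cong_sets[OF sets_eq[of i] refl] by (rule X_meas)
    have mY: "Y \<in> borel_measurable (P i)" unfolding measurable_cong_sets[OF sets_eq[of i] refl] by (rule Y_meas)
    have iX: "integrable (P i) X" by (rule square_integrable_imp_integrable[OF mX X_sq])
    have iY: "integrable (P i) Y" by (rule square_integrable_imp_integrable[OF mY Y_sq])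
    have iXY: "integrable (P i) (\<lambda>w. X w * Y w)"
    proof (rule Bochner_Integration.integrable_bound[where f = "\<lambda>w. (X w)\<^sup>2 + (Y w)\<^sup>2"])
      show "integrable (P i) (\<lambda>w. (X w)\<^sup>2 + (Y w)\<^sup>2)" using X_sq Y_sq by simp
      show "(\<lambda>w. X w * Y w) \<in> borel_measurable (P i)" using mX mY by simp
      show "AE w in P i. norm (X w * Y w) \<le> norm ((X w)\<^sup>2 + (Y w)\<^sup>2)"
        using absxy by (simp add: add_nonneg_nonneg)
    qed
    have eqf: "(\<lambda>w. (X w - m1) * (Y w - m2)) = (\<lambda>w. ((X w * Y w - m2 * X w) - m1 * Y w) + m1 * m2)"
      by (auto simp: algebra_simps)
    have "integral\<^sup>L (P i) (\<lambda>w. (X w - m1) * (Y w - m2)) = c i - m2 * a i - m1 * b i + m1 * m2"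
      unfolding eqf a_def b_def c_def using iX iY iXY
      by (simp add: Bochner_Integration.integral_diff Bochner_Integration.integral_add prob_space)
    then show ?thesis unfolding a_def b_def by simp
  qed
  define A0 where "A0 = - Max (range (\<lambda>i. - a i))"
  define A1 where "A1 = Max (range a)"
  define B0 where "B0 = - Max (range (\<lambda>i. - b i))"
  define B1 where "B1 = Max (range b)"
  have ha: "A0 \<le> a i \<and> a i \<le> A1" for i proof -
    have "- a i \<le> Max (range (\<lambda>i. - a i))" by (rule Max_ge) auto
    moreover have "a i \<le> Max (range a)" by (rule Max_ge) auto
    ultimately show ?thesis unfolding A0_def A1_def by linarith
  qed
  have hb: "B0 \<le> b i \<and> b i \<le> B1" for i proof -
    have "- b i \<le> Max (range (\<lambda>i. - b i))" by (rule Max_ge) auto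
    moreover have "b i \<le> Max (range b)" by (rule Max_ge) auto
    ultimately show ?thesis unfolding B0_def B1_def by linarith
  qed
  have MX: "mean_interval P X = {A0..A1}"
    unfolding mean_interval_def lower_mean_def upper_mean_def sublin_exp_def A0_def A1_def
    using facts by (simp add: a_def)
  have MY: "mean_interval P Y = {B0..B1}"
    unfolding mean_interval_def lower_mean_def upper_mean_def sublin_exp_def B0_def B1_def
    using facts by (simp add: b_def)
  have SE: "sublin_exp P (\<lambda>w. (X w - m1) * (Y w - m2)) = Max (range (\<lambda>i. c i - m2*a i - m1*b i + m1*m2))"
    for m1 m2 unfolding sublin_exp_def using facts by simp
  have "upper_cov P X Y = (SUP m2\<in>{B0..B1}. INF m1\<in>{A0..A1}. Max (range (\<lambda>i. c i - m2*a i - m1*b i + m1*m2)))"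
    unfolding upper_cov_def MX MY SE ..
  also have "\<dots> = (SUP l\<in>prob_simplex. (\<Sum>i\<in>UNIV. l i * c i) - (\<Sum>i\<in>UNIV. l i * a i) * (\<Sum>i\<in>UNIV. l i * b i))"
    by (rule main_pure[OF ha hb])
  finally show ?thesis unfolding a_def b_def c_def .
qed

end
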